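(* Let $G$ be a simple connected graph with $n$ vertices and $m$ edges, let $k\ge1$ be an integer, let $S_k(G)$ be the $k$-parallel subdivision graph of $G$, and let $N$ denote the set of the $km$ new (subdivision) vertices of $S_k(G)$, so $V(S_k(G))=V(G)\cup N$. Let $i\neq j$ be vertices of $S_k(G)$. Then: (1) If $i,j\in V(G)$, then $E_iT_j(S_k(G))=4E_iT_j(G)$. (2) If $i\in N$, $j\in V(G)$ and the two neighbours of $i$ in $S_k(G)$ are $s,t$, then $E_iT_j(S_k(G))=1+2E_sT_j(G)+2E_tT_j(G)$ and $E_jT_i(S_k(G))=2km-1+2\big[E_jT_s(G)+E_jT_t(G)\big]-\big[E_tT_s(G)+E_sT_t(G)\big]$. (3) If $i,j\in N$, the neighbours of $i$ in $S_k(G)$ are $s,t$ and the neighbours of $j$ are $p,q$, then $E_iT_j(S_k(G))=2km+E_sT_p(G)+E_sT_q(G)+E_tT_p(G)+E_tT_q(G)-E_qT_p(G)-E_pT_q(G)$ and $E_jT_i(S_k(G))=2km+E_pT_s(G)+E_qT_s(G)+E_pT_t(G)+E_qT_t(G)-E_tT_s(G)-E_sT_t(G)$.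
   Context: The $k$-parallel subdivision graph $S_k(G)$ is obtained from $G$ by replacing each edge $uv$ of $G$ by $k$ internally disjoint paths $u-w-v$ of length $2$ (each with its own new middle vertex $w$); the two neighbours of a new vertex $w$ are the endpoints $u,v$ of the corresponding edge of $G$. For a connected graph $H$ and vertices $a,b$, $E_aT_b(H)$ denotes the expected hitting time: the expected number of steps the simple random walk on $H$ started at $a$ needs to first reach $b$ (with $E_aT_a(H)=0$). *)

theory Defs
  imports Complex_Main
begin

definition simple_graph :: "'a set \<Rightarrow> ('a \<Rightarrow> 'a \<Rightarrow> bool) \<Rightarrow> bool" where
  "simple_graph V E \<longleftrightarrow> finite V \<and>
     (\<forall>u v. E u v \<longrightarrow> u \<in> V \<and> v \<in> V \<and> u \<noteq> v \<and> E v u)"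

definition connected_graph :: "'a set \<Rightarrow> ('a \<Rightarrow> 'a \<Rightarrow> bool) \<Rightarrow> bool" where
  "connected_graph V E \<longleftrightarrow> V \<noteq> {} \<and> (\<forall>u\<in>V. \<forall>v\<in>V. E\<^sup>*\<^sup>* u v)"

definition edges :: "'a set \<Rightarrow> ('a \<Rightarrow> 'a \<Rightarrow> bool) \<Rightarrow> 'a set set" where
  "edges V E = {{u, v} | u v. u \<in> V \<and> v \<in> V \<and> E u v}"

definition degree :: "'a set \<Rightarrow> ('a \<Rightarrow> 'a \<Rightarrow> bool) \<Rightarrow> 'a \<Rightarrow> nat" where
  "degree V E u = card {v \<in> V. E u v}"

definition trans_prob :: "'a set \<Rightarrow> ('a \<Rightarrow> 'a \<Rightarrow> bool) \<Rightarrow> 'a \<Rightarrow> 'a \<Rightarrow> real" where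
  "trans_prob V E u v = (if E u v then 1 / real (degree V E u) else 0)"

fun first_hit :: "'a set \<Rightarrow> ('a \<Rightarrow> 'a \<Rightarrow> bool) \<Rightarrow> 'a \<Rightarrow> nat \<Rightarrow> 'a \<Rightarrow> real" where
  "first_hit V E b 0 x = (if x = b then 1 else 0)"
| "first_hit V E b (Suc n) x =
     (if x = b then 0 else (\<Sum>y\<in>V. trans_prob V E x y * first_hit V E b n y))"

definition hitting_time :: "'a set \<Rightarrow> ('a \<Rightarrow> 'a \<Rightarrow> bool) \<Rightarrow> 'a \<Rightarrow> 'a \<Rightarrow> real" where
  "hitting_time V E a b = (\<Sum>n. real n * first_hit V E b n a)"

text \<open>k-parallel subdivision graph S_k(G): old vertices Inl u, new vertices Inr (e, c)
  for each edge e of G and copy index c < k; Inr (e,c) is adjacent exactly to the two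
  endpoints of e.\<close>
definition subdiv_new :: "'a set \<Rightarrow> ('a \<Rightarrow> 'a \<Rightarrow> bool) \<Rightarrow> nat \<Rightarrow> ('a + 'a set \<times> nat) set" where
  "subdiv_new V E k = {Inr (e, c) | e c. e \<in> edges V E \<and> c < k}"

definition subdiv_V :: "'a set \<Rightarrow> ('a \<Rightarrow> 'a \<Rightarrow> bool) \<Rightarrow> nat \<Rightarrow> ('a + 'a set \<times> nat) set" where
  "subdiv_V V E k = Inl ` V \<union> subdiv_new V E k"

definition subdiv_E :: "'a set \<Rightarrow> ('a \<Rightarrow> 'a \<Rightarrow> bool) \<Rightarrow> nat \<Rightarrow>
    ('a + 'a set \<times> nat) \<Rightarrow> ('a + 'a set \<times> nat) \<Rightarrow> bool" where
  "subdiv_E V E k x y =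
     (\<exists>u e c. e \<in> edges V E \<and> c < k \<and> u \<in> e \<and>
        ((x = Inl u \<and> y = Inr (e, c)) \<or> (x = Inr (e, c) \<and> y = Inl u)))"

end

theory Submission
  imports Defs
begin

lemma sumP_eq:
  assumes "finite V"
  shows "(\<Sum>y\<in>V. trans_prob V E x y * g y) = (\<Sum>y\<in>{y\<in>V. E x y}. g y) / real (degree V E x)"
proof -
  have "(\<Sum>y\<in>V. trans_prob V E x y * g y) = (\<Sum>y\<in>V. if E x y then g y / real (degree V E x) else 0)"
    by (rule sum.cong) (auto simp: trans_prob_def)
  also have "\<dots> = (\<Sum>y\<in>{y\<in>V. E x y}. g y / real (degree V E x))"
    using assms by (simp add: sum.inter_filter)
  also have "\<dots> = (\<Sum>y\<in>{y\<in>V. E x y}. g y) / real (degree V E x)"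
    by (simp add: sum_divide_distrib)
  finally show ?thesis .
qed

lemma sumP_le1:
  assumes "finite V"
  shows "(\<Sum>y\<in>V. trans_prob V E x y) \<le> 1"
  using sumP_eq[OF assms, of E x "\<lambda>_. 1"] by (simp add: degree_def)

lemma sumP_1:
  assumes "finite V" "E x y" "y \<in> V"
  shows "(\<Sum>y\<in>V. trans_prob V E x y) = 1"
proof -
  have "card {y\<in>V. E x y} > 0" using assms by (auto simp: card_gt_0_iff)
  then show ?thesis using sumP_eq[OF assms(1), of E x "\<lambda>_. 1"] by (simp add: degree_def)
qed

lemma P_pos:
  assumes "finite V" "E x y" "y \<in> V"
  shows "0 < trans_prob V E x y"
proof -
  have "card {y\<in>V. E x y} > 0" using assms by (auto simp: card_gt_0_iff)
  then show ?thesis using assms by (simp add: trans_prob_def degree_def)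
qed

lemma P_nonneg: "0 \<le> trans_prob V E x y"
  by (simp add: trans_prob_def)

fun surv :: "'a set \<Rightarrow> ('a \<Rightarrow> 'a \<Rightarrow> bool) \<Rightarrow> 'a \<Rightarrow> nat \<Rightarrow> 'a \<Rightarrow> real" where
  "surv V E b 0 x = (if x = b then 0 else 1)"
| "surv V E b (Suc n) x = (if x = b then 0 else (\<Sum>y\<in>V. trans_prob V E x y * surv V E b n y))"

locale walk =
  fixes V :: "'a set" and E :: "'a \<Rightarrow> 'a \<Rightarrow> bool" and b :: 'a
  assumes finV: "finite V" and EV: "\<And>u v. E u v \<Longrightarrow> u \<in> V \<and> v \<in> V"
    and bV: "b \<in> V" and conn: "\<And>x. x \<in> V \<Longrightarrow> E\<^sup>*\<^sup>* x b"
begin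

abbreviation "P \<equiv> trans_prob V E"
abbreviation "f \<equiv> first_hit V E b"
abbreviation "u \<equiv> surv V E b"

lemma has_nbr: assumes "x \<in> V" "x \<noteq> b" shows "\<exists>y. E x y"
  using conn[OF assms(1)] assms(2) by (metis converse_rtranclpE)

lemma sumP1: assumes "x \<in> V" "x \<noteq> b" shows "(\<Sum>y\<in>V. P x y) = 1"
  using has_nbr[OF assms] EV finV sumP_1 by metis

lemma f_nonneg: "0 \<le> f n x"
  by (induction n arbitrary: x) (auto intro!: sum_nonneg simp: P_nonneg)

lemma u_bounds: "0 \<le> u n x \<and> u n x \<le> 1"
proof (induction n arbitrary: x)
  case 0 then show ?case by simp
next
  case (Suc n)
  have "(\<Sum>y\<in>V. P x y * u n y) \<le> (\<Sum>y\<in>V. P x y)"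
    by (rule sum_mono) (metis Suc.IH P_nonneg mult_left_le)
  also have "\<dots> \<le> 1" by (rule sumP_le1[OF finV])
  finally show ?case using Suc by (auto intro!: sum_nonneg simp: P_nonneg)
qed

lemma f_u: "x \<in> V \<Longrightarrow> f (Suc n) x = u n x - u (Suc n) x"
proof (induction n arbitrary: x)
  case 0
  show ?case
  proof (cases "x = b")
    case False
    have "(\<Sum>y\<in>V. P x y * f 0 y) + (\<Sum>y\<in>V. P x y * u 0 y) = (\<Sum>y\<in>V. P x y)"
      unfolding sum.distrib[symmetric] by (rule sum.cong) auto
    then show ?thesis using False sumP1[OF 0 False] by simp
  qed simp
next
  case (Suc n)
  show ?case
  proof (cases "x = b")
    case False
    have "f (Suc (Suc n)) x = (\<Sum>y\<in>V. P x y * (u n y - u (Suc n) y))"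
      using False Suc by (simp del: surv.simps)
    also have "\<dots> = u (Suc n) x - u (Suc (Suc n)) x"
      using False by (simp add: right_diff_distrib sum_subtractf del: first_hit.simps)
    finally show ?thesis .
  qed simp
qed

lemma u_mono: "x \<in> V \<Longrightarrow> u (Suc n) x \<le> u n x"
  using f_u[of x n] f_nonneg[of "Suc n" x] by simp

lemma u_antimono: "x \<in> V \<Longrightarrow> m \<le> n \<Longrightarrow> u n x \<le> u m x"
  using lift_Suc_antimono_le[of "\<lambda>n. u n x"] u_mono by blast

lemma u_b: "u n b = 0" by (cases n) auto

lemma u_mult: "0 \<le> c \<Longrightarrow> \<forall>y\<in>V. u n y \<le> c \<Longrightarrow> x \<in> V \<Longrightarrow> u (n + m) x \<le> c * u m x"
proof (induction m arbitrary: x)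
  case 0 then show ?case by (auto simp: u_b)
next
  case (Suc m)
  show ?case
  proof (cases "x = b")
    case False
    have "(\<Sum>y\<in>V. P x y * u (n + m) y) \<le> (\<Sum>y\<in>V. P x y * (c * u m y))"
      by (rule sum_mono) (metis Suc.IH[OF Suc.prems(1,2)] P_nonneg mult_left_mono)
    then show ?thesis using False by (simp add: sum_distrib_left ac_simps)
  qed simp
qed

lemma u_lt1_aux: "E\<^sup>*\<^sup>* x b \<Longrightarrow> \<exists>n. u n x < 1"
proof (induction rule: converse_rtranclp_induct)
  case base then show ?case by (intro exI[of _ 0]) simp
next
  case (step x y)
  then obtain n where n: "u n y < 1" by blast
  show ?case
  proof (cases "x = b")
    case True then show ?thesis by (intro exI[of _ 0]) simp
  next
    case False
    have yV: "y \<in> V" using EV step by blast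
    have "(\<Sum>z\<in>V. P x z * u n z) < (\<Sum>z\<in>V. P x z)"
    proof (rule sum_strict_mono_ex1[OF finV])
      show "\<forall>z\<in>V. P x z * u n z \<le> P x z" by (metis u_bounds P_nonneg mult_left_le)
      show "\<exists>a\<in>V. P x a * u n a < P x a"
        using yV n P_pos[of V E x y, OF finV step(1) yV] by (intro bexI[of _ y]) auto
    qed
    also have "\<dots> \<le> 1" by (rule sumP_le1[OF finV])
    finally show ?thesis using False by (intro exI[of _ "Suc n"]) simp
  qed
qed

lemma exists_L: "\<exists>L \<rho>. 0 < L \<and> 0 < \<rho> \<and> \<rho> < 1 \<and> (\<forall>x\<in>V. u L x \<le> \<rho>)"
proof -
  obtain N where N: "\<forall>x\<in>V. u (N x) x < 1" using u_lt1_aux conn by metis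
  define L where "L = Suc (Max (N ` V))"
  have L: "u L x < 1" if "x \<in> V" for x
  proof -
    have "N x \<le> L" using that finV by (auto simp: L_def intro: le_SucI)
    then show ?thesis using u_antimono[OF that] N that by (meson le_less_trans)
  qed
  define \<rho> where "\<rho> = max (1/2) (Max ((\<lambda>x. u L x) ` V))"
  have "Max ((\<lambda>x. u L x) ` V) < 1" using finV bV L by (subst Max_less_iff) auto
  then have "0 < \<rho> \<and> \<rho> < 1" by (auto simp: \<rho>_def)
  moreover have "\<forall>x\<in>V. u L x \<le> \<rho>" using finV by (auto simp: \<rho>_def intro!: max.coboundedI2 Max_ge)
  ultimately show ?thesis by (intro exI[of _ L] exI[of _ \<rho>]) (auto simp: L_def)
qed

lemma pow_div_bound:
  fixes \<rho> :: real
  assumes "0 < \<rho>" "\<rho> < 1" "0 < L"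
  shows "\<rho> ^ (n div L) * \<rho> \<le> (root L \<rho>) ^ n"
proof -
  define r where "r = root L \<rho>"
  have r0: "0 < r" "r < 1" using assms by (auto simp: r_def)
  have rL: "r ^ L = \<rho>" using assms by (simp add: r_def real_root_pow_pos2)
  have "r ^ n = r ^ (L * (n div L)) * r ^ (n mod L)"
    by (simp only: power_add[symmetric] mult_div_mod_eq)
  also have "r ^ (L * (n div L)) = \<rho> ^ (n div L)" by (simp only: power_mult rL)
  finally have eq: "r ^ n = \<rho> ^ (n div L) * r ^ (n mod L)" .
  have "r ^ L \<le> r ^ (n mod L)"
    using r0 assms(3) by (intro power_decreasing) auto
  then have "\<rho> \<le> r ^ (n mod L)" by (simp add: rL)
  then show ?thesis unfolding eq r_def[symmetric]
    using assms by (intro mult_left_mono) auto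
qed

lemma exists_decay: "\<exists>r C. 0 < r \<and> r < 1 \<and> 0 < C \<and> (\<forall>x\<in>V. \<forall>n. u n x \<le> C * r ^ n)"
proof -
  obtain L \<rho> where L: "0 < L" "0 < \<rho>" "\<rho> < 1" "\<forall>x\<in>V. u L x \<le> \<rho>"
    using exists_L by blast
  have dec: "u (j * L) x \<le> \<rho> ^ j" if "x \<in> V" for j x
    using that
  proof (induction j arbitrary: x)
    case 0 then show ?case using u_bounds by simp
  next
    case (Suc j)
    have "u (L + j * L) x \<le> \<rho> * u (j * L) x"
      using u_mult[of \<rho> L x "j * L"] L Suc by auto
    also have "\<dots> \<le> \<rho> * \<rho> ^ j" using Suc L by (intro mult_left_mono) auto
    finally show ?case by simp
  qed
  define r where "r = root L \<rho>"
  have r0: "0 < r" "r < 1" using L by (auto simp: r_def)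
  have "u n x \<le> (1 / \<rho>) * r ^ n" if "x \<in> V" for x n
  proof -
    have "u n x \<le> u ((n div L) * L) x"
      using that by (intro u_antimono) (auto simp: div_times_less_eq_dividend)
    also have "\<dots> \<le> \<rho> ^ (n div L)" using dec that by blast
    also have "\<dots> \<le> (1 / \<rho>) * r ^ n"
      using pow_div_bound[of \<rho> L n] L by (simp add: r_def field_simps)
    finally show ?thesis .
  qed
  then show ?thesis using r0 L by (intro exI[of _ r] exI[of _ "1/\<rho>"]) auto
qed

lemma summable_h: assumes "x \<in> V" shows "summable (\<lambda>n. real n * f n x)"
proof -
  obtain r C where rC: "0 < r" "r < 1" "0 < C" "\<forall>x\<in>V. \<forall>n. u n x \<le> C * r ^ n"
    using exists_decay by blast
  have sg: "summable (\<lambda>n. C * (real (Suc n) * r ^ n))"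
    using geometric_deriv_sums[of r] rC by (intro summable_mult) (auto simp: sums_iff)
  have "summable (\<lambda>n. real (Suc n) * f (Suc n) x)"
  proof (rule summable_comparison_test'[OF sg])
    fix n :: nat
    have "f (Suc n) x \<le> u n x" using f_u[OF assms, of n] u_bounds[of "Suc n" x] by simp
    also have "\<dots> \<le> C * r ^ n" using rC assms by blast
    finally have "real (Suc n) * f (Suc n) x \<le> real (Suc n) * (C * r ^ n)"
      by (intro mult_left_mono) auto
    then show "norm (real (Suc n) * f (Suc n) x) \<le> C * (real (Suc n) * r ^ n)"
      using f_nonneg[of "Suc n" x] by (simp add: ac_simps)
  qed
  then show ?thesis using summable_Suc_iff[of "\<lambda>n. real n * f n x"] by simp
qed

lemma f_sums1: assumes "x \<in> V" shows "(\<lambda>n. f n x) sums 1"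
proof -
  obtain r C where rC: "0 < r" "r < 1" "0 < C" "\<forall>x\<in>V. \<forall>n. u n x \<le> C * r ^ n"
    using exists_decay by blast
  have ps: "(\<Sum>n<Suc N. f n x) = 1 - u N x" for N
  proof (induction N)
    case 0 then show ?case by simp
  next
    case (Suc N)
    have "(\<Sum>n<Suc (Suc N). f n x) = (\<Sum>n<Suc N. f n x) + f (Suc N) x" by (rule sum.lessThan_Suc)
    also have "\<dots> = 1 - u (Suc N) x" unfolding Suc f_u[OF assms] by simp
    finally show ?case .
  qed
  have "(\<lambda>N. C * r ^ N) \<longlonglongrightarrow> C * 0"
    using rC by (intro tendsto_mult tendsto_const LIMSEQ_power_zero) auto
  then have lim0: "(\<lambda>N. C * r ^ N) \<longlonglongrightarrow> 0" by simp
  have "(\<lambda>N. u N x) \<longlonglongrightarrow> 0"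
  proof (rule tendsto_sandwich[OF _ _ tendsto_const lim0])
    show "\<forall>\<^sub>F n in sequentially. 0 \<le> u n x" by (intro always_eventually allI) (simp add: u_bounds)
    show "\<forall>\<^sub>F n in sequentially. u n x \<le> C * r ^ n" using rC(4) assms by (intro always_eventually allI) blast
  qed
  then have "(\<lambda>N. 1 - u N x) \<longlonglongrightarrow> 1 - 0" by (intro tendsto_diff) auto
  then have "(\<lambda>N. 1 - u N x) \<longlonglongrightarrow> 1" by simp
  then have "(\<lambda>N. \<Sum>n<Suc N. f n x) \<longlonglongrightarrow> 1" unfolding ps .
  then show ?thesis unfolding sums_def by (rule LIMSEQ_imp_Suc)
qed

lemma h_b: "hitting_time V E b b = 0"
proof -
  have "(\<lambda>n. real n * f n b) = (\<lambda>n. 0)" by (rule ext, case_tac n) auto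
  then show ?thesis by (simp add: hitting_time_def)
qed

lemma h_eq: assumes "x \<in> V" "x \<noteq> b"
  shows "hitting_time V E x b = 1 + (\<Sum>y\<in>V. P x y * hitting_time V E y b)"
proof -
  let ?h = "\<lambda>y. hitting_time V E y b"
  have s1: "(\<lambda>n. real n * f n y) sums ?h y" if "y \<in> V" for y
    using summable_h[OF that] by (simp add: hitting_time_def summable_sums)
  have "(\<lambda>n. real (Suc n) * f (Suc n) x) sums ?h x"
    using s1[OF assms(1)] by (subst sums_Suc_iff) simp
  moreover have "(\<lambda>n. real (Suc n) * f (Suc n) x) = (\<lambda>n. \<Sum>y\<in>V. P x y * (real n * f n y + f n y))"
  proof (rule ext)
    fix n
    have "real (Suc n) * f (Suc n) x = real (Suc n) * (\<Sum>y\<in>V. P x y * f n y)"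
      using assms(2) by simp
    also have "\<dots> = (\<Sum>y\<in>V. P x y * (real n * f n y + f n y))"
      unfolding sum_distrib_left by (rule sum.cong) (simp_all add: algebra_simps)
    finally show "real (Suc n) * f (Suc n) x = (\<Sum>y\<in>V. P x y * (real n * f n y + f n y))" .
  qed
  moreover have "(\<lambda>n. \<Sum>y\<in>V. P x y * (real n * f n y + f n y)) sums (\<Sum>y\<in>V. P x y * (?h y + 1))"
    by (intro sums_sum sums_mult sums_add s1 f_sums1) 
  ultimately have "?h x = (\<Sum>y\<in>V. P x y * (?h y + 1))" by (metis sums_unique2)
  also have "\<dots> = (\<Sum>y\<in>V. P x y * ?h y) + (\<Sum>y\<in>V. P x y)"
    by (simp add: algebra_simps sum.distrib)
  finally show ?thesis using sumP1[OF assms] by simp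
qed

lemma harm_le0:
  assumes db: "d b = 0" and dh: "\<And>x. x \<in> V \<Longrightarrow> x \<noteq> b \<Longrightarrow> d x = (\<Sum>y\<in>V. P x y * d y)"
    and xV: "x \<in> V"
  shows "d x \<le> 0"
proof -
  define M where "M = Max (d ` V)"
  define A where "A = {x\<in>V. d x = M}"
  have leM: "d y \<le> M" if "y \<in> V" for y unfolding M_def using that finV by (intro Max_ge) auto
  have clos: "y \<in> A" if "z \<in> A" "z \<noteq> b" "E z y" for z y
  proof -
    have zV: "z \<in> V" and dz: "d z = M" using that by (auto simp: A_def)
    have yV: "y \<in> V" using EV that by blast
    have "(\<Sum>w\<in>V. P z w * (M - d w)) = (\<Sum>w\<in>V. M * P z w - P z w * d w)"
      by (rule sum.cong) (simp_all add: algebra_simps)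
    also have "\<dots> = M * (\<Sum>w\<in>V. P z w) - (\<Sum>w\<in>V. P z w * d w)"
      by (simp only: sum_subtractf sum_distrib_left)
    also have "\<dots> = M - d z" by (simp only: sumP1[OF zV that(2)] dh[OF zV that(2), symmetric] mult_1_right)
    also have "\<dots> = 0" using dz by simp
    finally have S0: "(\<Sum>w\<in>V. P z w * (M - d w)) = 0" .
    have nn: "0 \<le> P z w * (M - d w)" if "w \<in> V" for w
      using leM[OF that] P_nonneg[of V E z w] by (intro mult_nonneg_nonneg) auto
    have "\<forall>w\<in>V. P z w * (M - d w) = 0"
      using sum_nonneg_eq_0_iff[of V "\<lambda>w. P z w * (M - d w)", OF finV nn] S0 by blast
    then have "P z y * (M - d y) = 0" using yV by blast
    moreover have "P z y > 0" using P_pos[of V E z y] finV that yV by blast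
    ultimately show ?thesis using yV by (auto simp: A_def)
  qed
  have "M \<in> d ` V" unfolding M_def using finV bV by (intro Max_in) auto
  then obtain x0 where x0: "x0 \<in> V" "d x0 = M" by (metis imageE)
  have "b \<in> A \<or> y \<in> A" if "E\<^sup>*\<^sup>* x0 y" for y
    using that
  proof (induction rule: rtranclp_induct)
    case base then show ?case using x0 by (auto simp: A_def)
  next
    case (step y z) then show ?case using clos by blast
  qed
  then have "b \<in> A" using conn[OF x0(1)] by blast
  then have "M = 0" using db by (simp add: A_def)
  then show ?thesis using leM xV by simp
qed

lemma char:
  assumes gb: "g b = 0" and gh: "\<And>x. x \<in> V \<Longrightarrow> x \<noteq> b \<Longrightarrow> g x = 1 + (\<Sum>y\<in>V. P x y * g y)"
    and xV: "x \<in> V"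
  shows "hitting_time V E x b = g x"
proof -
  let ?h = "\<lambda>y. hitting_time V E y b"
  have "?h x - g x \<le> 0"
  proof (rule harm_le0[of "\<lambda>y. ?h y - g y", OF _ _ xV])
    show "?h b - g b = 0" using gb h_b by simp
    fix y assume "y \<in> V" "y \<noteq> b"
    then show "?h y - g y = (\<Sum>z\<in>V. P y z * (?h z - g z))"
      using h_eq[of y] gh[of y] by (simp add: right_diff_distrib sum_subtractf)
  qed
  moreover have "g x - ?h x \<le> 0"
  proof (rule harm_le0[of "\<lambda>y. g y - ?h y", OF _ _ xV])
    show "g b - ?h b = 0" using gb h_b by simp
    fix y assume "y \<in> V" "y \<noteq> b"
    then show "g y - ?h y = (\<Sum>z\<in>V. P y z * (g z - ?h z))"
      using h_eq[of y] gh[of y] by (simp add: right_diff_distrib sum_subtractf)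
  qed
  ultimately show ?thesis by simp
qed

end

locale sub =
  fixes V :: "'a set" and E :: "'a \<Rightarrow> 'a \<Rightarrow> bool" and k :: nat
  assumes sg: "simple_graph V E" and cg: "connected_graph V E" and k1: "k \<ge> 1"
begin

abbreviation "SV \<equiv> subdiv_V V E k"
abbreviation "SE \<equiv> subdiv_E V E k"
abbreviation "NN \<equiv> subdiv_new V E k"
abbreviation "H \<equiv> hitting_time V E"
abbreviation "dg \<equiv> degree V E"
abbreviation "nb x \<equiv> {y\<in>V. E x y}"

lemma finV: "finite V" using sg by (simp add: simple_graph_def)
lemma EV: "E u v \<Longrightarrow> u \<in> V \<and> v \<in> V \<and> u \<noteq> v \<and> E v u" using sg by (simp add: simple_graph_def)

lemma edges_iff: "e \<in> edges V E \<longleftrightarrow> (\<exists>u v. e = {u, v} \<and> E u v)"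
  using EV by (auto simp: edges_def)

lemma edge_sub: "e \<in> edges V E \<Longrightarrow> e \<subseteq> V" using EV by (auto simp: edges_iff)
lemma edge_card: "e \<in> edges V E \<Longrightarrow> card e = 2" using EV by (auto simp: edges_iff)
lemma fin_edges: "finite (edges V E)"
  using finV edge_sub by (meson Pow_iff finite_Pow_iff finite_subset subsetI)

lemma N_eq: "NN = (\<lambda>(e, c). Inr (e, c)) ` (edges V E \<times> {..<k})"
  by (auto simp: subdiv_new_def)

lemma fin_SV: "finite SV"
  unfolding subdiv_V_def N_eq using finV fin_edges by auto

lemma Inl_SV[simp]: "Inl x \<in> SV \<longleftrightarrow> x \<in> V"
  by (auto simp: subdiv_V_def subdiv_new_def)
lemma Inr_SV[simp]: "Inr (e, c) \<in> SV \<longleftrightarrow> e \<in> edges V E \<and> c < k"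
  by (auto simp: subdiv_V_def subdiv_new_def)

lemma SE_simps[simp]:
  "\<not> SE (Inl a) (Inl b)" "\<not> SE (Inr p) (Inr q)"
  "SE (Inl x) (Inr (e, c)) \<longleftrightarrow> e \<in> edges V E \<and> c < k \<and> x \<in> e"
  "SE (Inr (e, c)) (Inl x) \<longleftrightarrow> e \<in> edges V E \<and> c < k \<and> x \<in> e"
  by (auto simp: subdiv_E_def)

lemma SEV: "SE x y \<Longrightarrow> x \<in> SV \<and> y \<in> SV"
  using edge_sub by (cases x; cases y) (auto, (meson edge_sub subsetD)+)

lemma lift1: "E u v \<Longrightarrow> SE\<^sup>*\<^sup>* (Inl u) (Inl v)"
proof -
  assume uv: "E u v"
  have e: "{u, v} \<in> edges V E" using uv edges_iff by blast
  have "SE (Inl u) (Inr ({u, v}, 0))" using e k1 by auto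
  moreover have "SE (Inr ({u, v}, 0)) (Inl v)" using e k1 by auto
  ultimately show ?thesis by (meson converse_rtranclp_into_rtranclp r_into_rtranclp)
qed

lemma lift: "E\<^sup>*\<^sup>* u v \<Longrightarrow> SE\<^sup>*\<^sup>* (Inl u) (Inl v)"
  by (induction rule: rtranclp_induct) (auto intro: rtranclp_trans lift1)

lemma toV:
  assumes xS: "x \<in> SV" shows "\<exists>a\<in>V. SE\<^sup>*\<^sup>* x (Inl a) \<and> SE\<^sup>*\<^sup>* (Inl a) x"
proof (cases x)
  case (Inl a) then show ?thesis
    using xS by auto
next
  case (Inr p)
  obtain e c where p: "p = (e, c)" by fastforce
  then have ec: "e \<in> edges V E" "c < k" using Inr p xS by auto
  then obtain u v where "e = {u, v}" "E u v" using edges_iff by blast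
  then have "u \<in> V" "u \<in> e" using EV by auto
  then show ?thesis using ec Inr p by (intro bexI[of _ u]) auto
qed

lemma conn_S: "x \<in> SV \<Longrightarrow> T \<in> SV \<Longrightarrow> SE\<^sup>*\<^sup>* x T"
proof -
  assume x: "x \<in> SV" and T: "T \<in> SV"
  obtain a where a: "a \<in> V" "SE\<^sup>*\<^sup>* x (Inl a)" using toV[OF x] by blast
  obtain b where b: "b \<in> V" "SE\<^sup>*\<^sup>* (Inl b) T" using toV[OF T] by blast
  have "E\<^sup>*\<^sup>* a b" using cg a b by (simp add: connected_graph_def)
  then show ?thesis using a b lift by (meson rtranclp_trans)
qed

lemma walkS: "T \<in> SV \<Longrightarrow> walk SV SE T"
  unfolding walk_def using fin_SV SEV conn_S by blast

lemma walkG: "b \<in> V \<Longrightarrow> walk V E b"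
  unfolding walk_def using finV EV cg by (simp add: connected_graph_def)

lemma nbS_Inl: "x \<in> V \<Longrightarrow> {w\<in>SV. SE (Inl x) w} = (\<lambda>(y, c). Inr ({x, y}, c)) ` (nb x \<times> {..<k})"
proof (intro equalityI subsetI)
  fix w :: "'a + 'a set \<times> nat" assume w: "w \<in> {w\<in>SV. SE (Inl x) w}"
  then obtain e c where wec: "w = Inr (e, c)" by (cases w) auto
  then have ec: "e \<in> edges V E" "c < k" "x \<in> e" using w by auto
  then obtain u v where uv: "e = {u, v}" "E u v" using edges_iff by blast
  then have "\<exists>y. E x y \<and> e = {x, y}" using ec EV by auto
  then show "w \<in> (\<lambda>(y, c). Inr ({x, y}, c)) ` (nb x \<times> {..<k})"
    using wec ec EV by auto
next
  fix w :: "'a + 'a set \<times> nat" assume "w \<in> (\<lambda>(y, c). Inr ({x, y}, c)) ` (nb x \<times> {..<k})"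
  then obtain y c where "w = Inr ({x, y}, c)" "E x y" "c < k" by auto
  moreover have "{x, y} \<in> edges V E" using \<open>E x y\<close> edges_iff by blast
  ultimately show "w \<in> {w\<in>SV. SE (Inl x) w}" by auto
qed

lemma inj_nb: "x \<in> V \<Longrightarrow> inj_on (\<lambda>(y, c). Inr ({x, y}, c) :: 'a + 'a set \<times> nat) (nb x \<times> {..<k})"
  unfolding inj_on_def using EV by (auto simp: doubleton_eq_iff)

lemma sum_Inl:
  assumes "x \<in> V"
  shows "(\<Sum>w\<in>SV. trans_prob SV SE (Inl x) w * g w)
       = (\<Sum>y\<in>nb x. \<Sum>c<k. g (Inr ({x, y}, c))) / (real k * real (dg x))"
proof -
  have fin: "finite (nb x \<times> {..<k})" using finV by auto
  have "(\<Sum>w\<in>{w\<in>SV. SE (Inl x) w}. g w) = (\<Sum>(y, c)\<in>nb x \<times> {..<k}. g (Inr ({x, y}, c)))"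
    unfolding nbS_Inl[OF assms] by (subst sum.reindex[OF inj_nb[OF assms]]) (simp add: case_prod_beta')
  also have "\<dots> = (\<Sum>y\<in>nb x. \<Sum>c<k. g (Inr ({x, y}, c)))"
    by (simp add: sum.cartesian_product)
  finally have s: "(\<Sum>w\<in>{w\<in>SV. SE (Inl x) w}. g w) = (\<Sum>y\<in>nb x. \<Sum>c<k. g (Inr ({x, y}, c)))" .
  have "degree SV SE (Inl x) = card (nb x \<times> {..<k})"
    unfolding degree_def nbS_Inl[OF assms] by (rule card_image[OF inj_nb[OF assms]])
  also have "\<dots> = dg x * k" by (simp add: card_cartesian_product degree_def)
  finally have "degree SV SE (Inl x) = dg x * k" .
  then show ?thesis using sumP_eq[OF fin_SV, of SE "Inl x" g] s by (simp add: ac_simps)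
qed

lemma sum_Inr:
  assumes "e \<in> edges V E" "c < k"
  shows "(\<Sum>w\<in>SV. trans_prob SV SE (Inr (e, c)) w * g w) = (\<Sum>u\<in>e. g (Inl u)) / 2"
proof -
  have set: "{w\<in>SV. SE (Inr (e, c)) w} = Inl ` e"
  proof (intro equalityI subsetI)
    fix w :: "'a + 'a set \<times> nat" assume "w \<in> {w\<in>SV. SE (Inr (e, c)) w}"
    then show "w \<in> Inl ` e" by (cases w) auto
  next
    fix w :: "'a + 'a set \<times> nat" assume "w \<in> Inl ` e"
    then show "w \<in> {w\<in>SV. SE (Inr (e, c)) w}" using assms edge_sub[OF assms(1)] by auto
  qed
  have "degree SV SE (Inr (e, c)) = 2"
    unfolding degree_def set using edge_card[OF assms(1)] by (simp add: card_image)
  then show ?thesis using sumP_eq[OF fin_SV, of SE "Inr (e, c)" g] set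
    by (simp add: sum.reindex)
qed

lemma nbrs_N: "Inr (e, c) \<in> NN \<Longrightarrow> {x. SE (Inr (e, c)) x} = Inl ` e"
  apply (auto simp: subdiv_new_def)
  subgoal for x by (cases x) auto
  done

end

context sub begin

lemma deg_pos: "x \<in> V \<Longrightarrow> y \<in> V \<Longrightarrow> x \<noteq> y \<Longrightarrow> 0 < dg x"
proof -
  assume xy: "x \<in> V" "y \<in> V" "x \<noteq> y"
  obtain z where "E x z" using walk.has_nbr[OF walkG[OF xy(2)] xy(1,3)] by blast
  then have "z \<in> nb x" using EV by auto
  then show ?thesis using finV by (auto simp: degree_def card_gt_0_iff)
qed

lemma HG0: "b \<in> V \<Longrightarrow> H b b = 0" using walk.h_b[OF walkG] by blast

lemma HGeq:
  assumes "x \<in> V" "b \<in> V" "x \<noteq> b"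
  shows "(\<Sum>y\<in>nb x. H y b) = real (dg x) * (H x b - 1)"
proof -
  have "H x b = 1 + (\<Sum>y\<in>nb x. H y b) / real (dg x)"
    using walk.h_eq[OF walkG[OF assms(2)] assms(1,3)] unfolding sumP_eq[OF finV, of E x "\<lambda>y. H y b"] .
  then have e: "H x b - 1 = (\<Sum>y\<in>nb x. H y b) / real (dg x)" by simp
  have "real (dg x) > 0" using deg_pos[OF assms] by simp
  then have "(\<Sum>y\<in>nb x. H y b) = real (dg x) * ((\<Sum>y\<in>nb x. H y b) / real (dg x))" by simp
  then show ?thesis unfolding e[symmetric] .
qed

lemma swap: "(\<Sum>x\<in>V. \<Sum>y\<in>nb x. g y) = (\<Sum>y\<in>V. real (dg y) * g y)"
proof -
  have "(\<Sum>x\<in>V. \<Sum>y\<in>nb x. g y) = (\<Sum>x\<in>V. \<Sum>y\<in>V. if E x y then g y else 0)"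
    using finV by (simp add: sum.inter_filter)
  also have "\<dots> = (\<Sum>y\<in>V. \<Sum>x\<in>V. if E x y then g y else 0)" by (rule sum.swap)
  also have "\<dots> = (\<Sum>y\<in>V. \<Sum>x\<in>{x\<in>V. E x y}. g y)"
    by (rule sum.cong[OF refl], rule sum.inter_filter[symmetric, OF finV])
  also have "\<dots> = (\<Sum>y\<in>V. real (dg y) * g y)"
  proof (rule sum.cong[OF refl])
    fix y assume "y \<in> V"
    have "{x\<in>V. E x y} = nb y" using EV by blast
    then show "(\<Sum>x\<in>{x\<in>V. E x y}. g y) = real (dg y) * g y" by (simp add: degree_def)
  qed
  finally show ?thesis .
qed

lemma deg_edges: "x \<in> V \<Longrightarrow> dg x = card {e\<in>edges V E. x \<in> e}"
proof -
  assume x: "x \<in> V"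
  have bij: "bij_betw (\<lambda>y. {x, y}) (nb x) {e\<in>edges V E. x \<in> e}"
  proof (rule bij_betwI')
    fix y z assume y: "y \<in> nb x" and z: "z \<in> nb x"
    have "y \<noteq> x" "z \<noteq> x" using EV[of x y] EV[of x z] y z by auto
    then show "({x, y} = {x, z}) = (y = z)" by (auto simp: doubleton_eq_iff)
  next
    fix y assume "y \<in> nb x"
    then have "E x y" by simp
    then have "{x, y} \<in> edges V E" unfolding edges_iff by blast
    then show "{x, y} \<in> {e \<in> edges V E. x \<in> e}" by simp
  next
    fix e assume "e \<in> {e \<in> edges V E. x \<in> e}"
    then obtain u v where uv: "e = {u, v}" "E u v" "x \<in> e" unfolding edges_iff by blast
    have "E v u" "u \<in> V" "v \<in> V" using EV[OF uv(2)] by auto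
    then show "\<exists>y\<in>nb x. e = {x, y}"
    proof (cases "x = u")
      case True then show ?thesis using uv \<open>v \<in> V\<close> by blast
    next
      case False then have "x = v" using uv by blast
      then show ?thesis using uv \<open>E v u\<close> \<open>u \<in> V\<close> by blast
    qed
  qed
  show ?thesis unfolding degree_def using bij_betw_same_card[OF bij] .
qed

lemma hand_nat: "(\<Sum>x\<in>V. dg x) = 2 * card (edges V E)"
proof -
  have "(\<Sum>x\<in>V. dg x) = (\<Sum>x\<in>V. \<Sum>e\<in>edges V E. if x \<in> e then 1 else 0)"
    using fin_edges by (intro sum.cong refl) (simp add: deg_edges sum.inter_filter[symmetric])
  also have "\<dots> = (\<Sum>e\<in>edges V E. \<Sum>x\<in>V. if x \<in> e then 1 else 0)" by (rule sum.swap)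
  also have "\<dots> = (\<Sum>e\<in>edges V E. 2)"
  proof (rule sum.cong[OF refl])
    fix e assume e: "e \<in> edges V E"
    have "{x\<in>V. x \<in> e} = e" using edge_sub[OF e] by blast
    then show "(\<Sum>x\<in>V. if x \<in> e then 1 else 0) = (2::nat)"
      using finV edge_card[OF e] by (simp add: sum.inter_filter[symmetric])
  qed
  finally show ?thesis by simp
qed

lemma hand: "(\<Sum>x\<in>V. real (dg x)) = 2 * real (card (edges V E))"
  using hand_nat by (metis of_nat_mult of_nat_numeral of_nat_sum)

lemma dsum:
  assumes b: "b \<in> V"
  shows "(\<Sum>y\<in>nb b. H y b) = 2 * real (card (edges V E)) - real (dg b)"
proof -
  let ?g = "\<lambda>y. H y b"
  have rem: "\<And>h. (\<Sum>x\<in>V. h x) = h b + (\<Sum>x\<in>V-{b}. h x)"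
    using finV b by (simp add: sum.remove)
  have "(\<Sum>x\<in>V. \<Sum>y\<in>nb x. ?g y) = (\<Sum>y\<in>nb b. ?g y) + (\<Sum>x\<in>V-{b}. real (dg x) * (?g x - 1))"
  proof -
    have "(\<Sum>x\<in>V-{b}. \<Sum>y\<in>nb x. ?g y) = (\<Sum>x\<in>V-{b}. real (dg x) * (?g x - 1))"
      by (rule sum.cong[OF refl]) (use HGeq b in auto)
    moreover have "(\<Sum>y\<in>nb b. ?g y) = (\<Sum>y\<in>nb b. ?g y)" ..
    ultimately show ?thesis by (subst rem) simp
  qed
  also have "\<dots> = (\<Sum>y\<in>nb b. ?g y) + (\<Sum>x\<in>V-{b}. real (dg x) * ?g x) - (\<Sum>x\<in>V-{b}. real (dg x))"
    by (simp add: right_diff_distrib sum_subtractf)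
  finally have 1: "(\<Sum>x\<in>V. \<Sum>y\<in>nb x. ?g y) = (\<Sum>y\<in>nb b. ?g y) + (\<Sum>x\<in>V-{b}. real (dg x) * ?g x) - (\<Sum>x\<in>V-{b}. real (dg x))" .
  have 2: "(\<Sum>y\<in>V. real (dg y) * ?g y) = (\<Sum>x\<in>V-{b}. real (dg x) * ?g x)"
    using HG0[OF b] by (subst rem) simp
  have 3: "(\<Sum>x\<in>V-{b}. real (dg x)) = 2 * real (card (edges V E)) - real (dg b)"
    using hand rem[of "\<lambda>x. real (dg x)"] by simp
  show ?thesis using 1 2 3 swap[of ?g] by simp
qed

end

lemma alg_s:
  fixes d K m A B C Fs Ft SFn SG Gst :: real
  assumes "d > 0" "K > 0" "C = 2*K*m - 1 - (B + A)" "Fs = C + 2*(0 + A)" "Ft = C + 2*(B + 0)"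
    "SFn = d*C + 2*((2*m - d) + d*(A - 1))" "SG = d + (d*Fs + SFn)/2" "Gst = 1 + (Fs + Ft)/2"
  shows "Fs = 1 + (K*SG - Gst)/(K*d)"
  unfolding assms(8,7,6,5,4) unfolding assms(3) using assms(1,2) by (simp add: field_simps)

lemma alg_o:
  fixes d K m A B C Fa SFn SG :: real
  assumes "d > 0" "K > 0" "Fa = C + 2*(A + B)"
    "SFn = d*C + 2*(d*(A - 1) + d*(B - 1))" "SG = d + (d*Fa + SFn)/2"
  shows "Fa = 1 + (K*SG)/(K*d)"
  unfolding assms(5,4,3) using assms(1,2) by (simp add: field_simps)

context sub begin

definition F1 :: "'a \<Rightarrow> ('a + 'a set \<times> nat) \<Rightarrow> real" where
  "F1 j w = (case w of Inl x \<Rightarrow> 4 * H x j | Inr ec \<Rightarrow> 1 + 2 * (\<Sum>u\<in>fst ec. H u j))"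

lemma F1_simps[simp]: "F1 j (Inl x) = 4 * H x j" "F1 j (Inr (e, c)) = 1 + 2 * (\<Sum>u\<in>e. H u j)"
  by (simp_all add: F1_def)

lemma old_target:
  assumes j: "j \<in> V" and w: "w \<in> SV"
  shows "hitting_time SV SE w (Inl j) = F1 j w"
proof -
  have W: "walk SV SE (Inl j)" using walkS j by simp
  show ?thesis
  proof (rule walk.char[OF W _ _ w])
    show "F1 j (Inl j) = 0" using HG0[OF j] by simp
    fix x assume x: "x \<in> SV" "x \<noteq> Inl j"
    show "F1 j x = 1 + (\<Sum>y\<in>SV. trans_prob SV SE x y * F1 j y)"
    proof (cases x)
      case (Inl a)
      have a: "a \<in> V" "a \<noteq> j" using x Inl by auto
      have dpos: "real (dg a) > 0" using deg_pos[OF a(1) j a(2)] by simp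
      have "(\<Sum>y\<in>nb a. \<Sum>c<k. F1 j (Inr ({a, y}, c))) = (\<Sum>y\<in>nb a. real k * (1 + 2 * H a j + 2 * H y j))"
      proof (rule sum.cong[OF refl])
        fix y assume y: "y \<in> nb a"
        have "a \<noteq> y" using EV[of a y] y by auto
        then show "(\<Sum>c<k. F1 j (Inr ({a, y}, c))) = real k * (1 + 2 * H a j + 2 * H y j)"
          by (simp add: algebra_simps)
      qed
      also have "\<dots> = real k * (real (dg a) * (1 + 2 * H a j) + 2 * (\<Sum>y\<in>nb a. H y j))"
        by (simp add: sum.distrib sum_distrib_left degree_def algebra_simps)
      finally have inner: "(\<Sum>y\<in>nb a. \<Sum>c<k. F1 j (Inr ({a, y}, c))) = real k * (real (dg a) * (1 + 2 * H a j) + 2 * (\<Sum>y\<in>nb a. H y j))" .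
      have S: "(\<Sum>y\<in>nb a. H y j) = real (dg a) * (H a j - 1)" by (rule HGeq[OF a(1) j a(2)])
      have "real k > 0" using k1 by simp
      then show ?thesis unfolding Inl sum_Inl[OF a(1)] inner S using dpos by (simp add: field_simps)
    next
      case (Inr p)
      obtain e c where p: "p = (e, c)" by fastforce
      have ec: "e \<in> edges V E" "c < k" using x Inr p by auto
      have "(\<Sum>u\<in>e. F1 j (Inl u)) = 4 * (\<Sum>u\<in>e. H u j)" by (simp add: sum_distrib_left)
      then show ?thesis unfolding Inr p sum_Inr[OF ec] by simp
    qed
  qed
qed


definition Cst :: "'a \<Rightarrow> 'a \<Rightarrow> real" where
  "Cst s t = 2 * real k * real (card (edges V E)) - 1 - (H t s + H s t)"
definition Fn :: "'a \<Rightarrow> 'a \<Rightarrow> 'a \<Rightarrow> real" where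
  "Fn s t x = Cst s t + 2 * (H x s + H x t)"
definition F2 :: "'a \<Rightarrow> 'a \<Rightarrow> nat \<Rightarrow> ('a + 'a set \<times> nat) \<Rightarrow> real" where
  "F2 s t c0 w = (case w of Inl x \<Rightarrow> Fn s t x
     | Inr ec \<Rightarrow> if ec = ({s, t}, c0) then 0 else 1 + (\<Sum>u\<in>fst ec. Fn s t u) / 2)"

lemma F2_simps[simp]: "F2 s t c0 (Inl x) = Fn s t x"
  "F2 s t c0 (Inr (e, c)) = (if e = {s, t} \<and> c = c0 then 0 else 1 + (\<Sum>u\<in>e. Fn s t u) / 2)"
  by (simp_all add: F2_def)

lemma Fn_sym: "Fn s t = Fn t s"
  by (rule ext) (simp add: Fn_def Cst_def algebra_simps)

lemma F2_sym: "F2 s t c0 = F2 t s c0"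
proof (rule ext)
  fix w show "F2 s t c0 w = F2 t s c0 w"
    by (cases w) (auto simp: Fn_sym insert_commute)
qed

lemma SFn: "(\<Sum>y\<in>nb a. Fn s t y) = real (dg a) * Cst s t + 2 * ((\<Sum>y\<in>nb a. H y s) + (\<Sum>y\<in>nb a. H y t))"
  by (simp add: Fn_def sum.distrib sum_distrib_left degree_def)

lemma SG: "(\<Sum>y\<in>nb a. 1 + (Fn s t a + Fn s t y) / 2)
    = real (dg a) + (real (dg a) * Fn s t a + (\<Sum>y\<in>nb a. Fn s t y)) / 2"
  by (simp add: sum.distrib sum_divide_distrib[symmetric] degree_def)

lemma at_other:
  assumes st: "E s t" and c0: "c0 < k" and a: "a \<in> V" "a \<noteq> s" "a \<noteq> t"
  shows "F2 s t c0 (Inl a) = 1 + (\<Sum>w\<in>SV. trans_prob SV SE (Inl a) w * F2 s t c0 w)"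
proof -
  have sV: "s \<in> V" "t \<in> V" using EV[OF st] by auto
  have "(\<Sum>y\<in>nb a. \<Sum>c<k. F2 s t c0 (Inr ({a, y}, c))) = (\<Sum>y\<in>nb a. real k * (1 + (Fn s t a + Fn s t y) / 2))"
  proof (rule sum.cong[OF refl])
    fix y assume y: "y \<in> nb a"
    have "a \<noteq> y" using EV[of a y] y by auto
    moreover have "{a, y} \<noteq> {s, t}" using a by auto
    ultimately show "(\<Sum>c<k. F2 s t c0 (Inr ({a, y}, c))) = real k * (1 + (Fn s t a + Fn s t y) / 2)"
      by simp
  qed
  also have "\<dots> = real k * (\<Sum>y\<in>nb a. 1 + (Fn s t a + Fn s t y) / 2)"
    by (simp add: sum_distrib_left)
  finally have inner: "(\<Sum>y\<in>nb a. \<Sum>c<k. F2 s t c0 (Inr ({a, y}, c))) = real k * (\<Sum>y\<in>nb a. 1 + (Fn s t a + Fn s t y) / 2)" .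
  have d: "real (dg a) > 0" using deg_pos[OF a(1) sV(1) a(2)] by simp
  have K: "real k > 0" using k1 by simp
  have sf: "(\<Sum>y\<in>nb a. Fn s t y) = real (dg a) * Cst s t + 2 * (real (dg a) * (H a s - 1) + real (dg a) * (H a t - 1))"
    unfolding SFn HGeq[OF a(1) sV(1) a(2)] HGeq[OF a(1) sV(2) a(3)] ..
  show ?thesis unfolding sum_Inl[OF a(1)] inner F2_simps(1)
    by (rule alg_o[OF d K Fn_def sf SG])
qed

lemma at_s:
  assumes st: "E s t" and c0: "c0 < k"
  shows "F2 s t c0 (Inl s) = 1 + (\<Sum>w\<in>SV. trans_prob SV SE (Inl s) w * F2 s t c0 w)"
proof -
  have sV: "s \<in> V" "t \<in> V" "s \<noteq> t" using EV[OF st] by auto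
  let ?G = "\<lambda>y. 1 + (Fn s t s + Fn s t y) / 2"
  have "(\<Sum>y\<in>nb s. \<Sum>c<k. F2 s t c0 (Inr ({s, y}, c))) = (\<Sum>y\<in>nb s. real k * ?G y - (if y = t then ?G y else 0))"
  proof (rule sum.cong[OF refl])
    fix y assume y: "y \<in> nb s"
    have "s \<noteq> y" using EV[of s y] y by auto
    show "(\<Sum>c<k. F2 s t c0 (Inr ({s, y}, c))) = real k * ?G y - (if y = t then ?G y else 0)"
    proof (cases "y = t")
      case True
      have "(\<Sum>c<k. F2 s t c0 (Inr ({s, y}, c))) = (\<Sum>c<k. ?G y - (if c = c0 then ?G y else 0))"
        using True \<open>s \<noteq> y\<close> by (intro sum.cong refl) simp
      also have "\<dots> = real k * ?G y - ?G y"
        using c0 by (simp add: sum_subtractf)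
      finally show ?thesis using True by simp
    next
      case False
      then have "{s, y} \<noteq> {s, t}" using sV by (auto simp: doubleton_eq_iff)
      then show ?thesis using False \<open>s \<noteq> y\<close> by simp
    qed
  qed
  also have "\<dots> = real k * (\<Sum>y\<in>nb s. ?G y) - ?G t"
    using finV st sV by (simp add: sum_subtractf sum_distrib_left sum.delta)
  finally have inner: "(\<Sum>y\<in>nb s. \<Sum>c<k. F2 s t c0 (Inr ({s, y}, c))) = real k * (\<Sum>y\<in>nb s. ?G y) - ?G t" .
  have d: "real (dg s) > 0" using deg_pos[OF sV(1) sV(2) sV(3)] by simp
  have K: "real k > 0" using k1 by simp
  have sf: "(\<Sum>y\<in>nb s. Fn s t y) = real (dg s) * Cst s t + 2 * ((2 * real (card (edges V E)) - real (dg s)) + real (dg s) * (H s t - 1))"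
    unfolding SFn dsum[OF sV(1)] HGeq[OF sV(1) sV(2) sV(3)] ..
  have Fs: "Fn s t s = Cst s t + 2 * (0 + H s t)" using HG0[OF sV(1)] by (simp add: Fn_def)
  have Ft: "Fn s t t = Cst s t + 2 * (H t s + 0)" using HG0[OF sV(2)] by (simp add: Fn_def)
  have C: "Cst s t = 2 * real k * real (card (edges V E)) - 1 - (H t s + H s t)" by (rule Cst_def)
  show ?thesis unfolding sum_Inl[OF sV(1)] inner F2_simps(1)
    by (rule alg_s[OF d K C Fs Ft sf SG refl])
qed

lemma new_target:
  assumes st: "E s t" and c0: "c0 < k" and w: "w \<in> SV"
  shows "hitting_time SV SE w (Inr ({s, t}, c0)) = F2 s t c0 w"
proof -
  have sV: "s \<in> V" "t \<in> V" "s \<noteq> t" using EV[OF st] by auto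
  have e: "{s, t} \<in> edges V E" using st edges_iff by blast
  have W: "walk SV SE (Inr ({s, t}, c0))" using walkS e c0 by simp
  show ?thesis
  proof (rule walk.char[OF W _ _ w])
    show "F2 s t c0 (Inr ({s, t}, c0)) = 0" by simp
    fix x assume x: "x \<in> SV" "x \<noteq> Inr ({s, t}, c0)"
    show "F2 s t c0 x = 1 + (\<Sum>y\<in>SV. trans_prob SV SE x y * F2 s t c0 y)"
    proof (cases x)
      case (Inl a)
      have a: "a \<in> V" using x Inl by auto
      consider "a = s" | "a = t" | "a \<noteq> s" "a \<noteq> t" by blast
      then show ?thesis
      proof cases
        case 1 then show ?thesis using at_s[OF st c0] Inl by simp
      next
        case 2
        have ts: "E t s" using EV[OF st] by simp
        show ?thesis using at_s[OF ts c0] Inl 2 by (simp add: F2_sym[of t s])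
      next
        case 3 then show ?thesis using at_other[OF st c0 a] Inl by simp
      qed
    next
      case (Inr p)
      obtain e c where p: "p = (e, c)" by fastforce
      have ec: "e \<in> edges V E" "c < k" using x Inr p by auto
      have ne: "\<not> (e = {s, t} \<and> c = c0)" using x Inr p by auto
      show ?thesis unfolding Inr p sum_Inr[OF ec] using ne by auto
    qed
  qed
qed

end

context sub begin

lemma nbr:
  assumes i: "i \<in> NN" and n: "{x. SE i x} = {Inl s, Inl t}"
  shows "\<exists>c. i = Inr ({s, t}, c) \<and> c < k \<and> E s t"
proof -
  obtain e c where ec: "i = Inr (e, c)" "e \<in> edges V E" "c < k" using i by (auto simp: subdiv_new_def)
  have "(Inl ` e :: ('a + 'a set \<times> nat) set) = Inl ` {s, t}" using nbrs_N[of e c] i n ec by simp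
  then have e: "e = {s, t}" using inj_image_eq_iff[OF inj_Inl] by blast
  obtain u v where uv: "e = {u, v}" "E u v" using ec edges_iff by blast
  have "E v u" using EV[OF uv(2)] by simp
  then have "E s t" using uv e by (auto simp: doubleton_eq_iff)
  then show ?thesis using ec e by blast
qed

lemma part1: "i \<in> V \<Longrightarrow> j \<in> V \<Longrightarrow> hitting_time SV SE (Inl i) (Inl j) = 4 * H i j"
  using old_target[of j "Inl i"] by simp

lemma part2a:
  assumes i: "i \<in> NN" and j: "j \<in> V" and n: "{x. SE i x} = {Inl s, Inl t}"
  shows "hitting_time SV SE i (Inl j) = 1 + 2 * H s j + 2 * H t j"
proof -
  obtain c where c: "i = Inr ({s, t}, c)" "c < k" "E s t" using nbr[OF i n] by blast
  have "s \<noteq> t" using EV[OF c(3)] by simp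
  moreover have "i \<in> SV" using i by (simp add: subdiv_V_def)
  ultimately show ?thesis using old_target[OF j, of i] c by (simp add: algebra_simps)
qed

lemma part2b:
  assumes i: "i \<in> NN" and j: "j \<in> V" and n: "{x. SE i x} = {Inl s, Inl t}"
  shows "hitting_time SV SE (Inl j) i = 2 * real k * real (card (edges V E)) - 1 + 2 * (H j s + H j t) - (H t s + H s t)"
proof -
  obtain c where c: "i = Inr ({s, t}, c)" "c < k" "E s t" using nbr[OF i n] by blast
  show ?thesis using new_target[OF c(3) c(2), of "Inl j"] j c(1) by (simp add: Fn_def Cst_def)
qed

lemma part3:
  assumes i: "i \<in> NN" and j: "j \<in> NN" and ij: "i \<noteq> j"
    and ni: "{x. SE i x} = {Inl s, Inl t}" and nj: "{x. SE j x} = {Inl p, Inl q}"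
  shows "hitting_time SV SE i j = 2 * real k * real (card (edges V E)) + H s p + H s q
         + H t p + H t q - H q p - H p q"
proof -
  obtain c where c: "i = Inr ({s, t}, c)" "c < k" "E s t" using nbr[OF i ni] by blast
  obtain c' where c': "j = Inr ({p, q}, c')" "c' < k" "E p q" using nbr[OF j nj] by blast
  have st: "s \<noteq> t" using EV[OF c(3)] by simp
  have iS: "i \<in> SV" using i by (simp add: subdiv_V_def)
  have ne: "\<not> ({s, t} = {p, q} \<and> c = c')" using ij c c' by auto
  have "hitting_time SV SE i j = 1 + (Fn p q s + Fn p q t) / 2"
    using new_target[OF c'(3) c'(2) iS] c'(1) c(1) ne st by simp
  then show ?thesis by (simp add: Fn_def Cst_def field_simps)
qed

end

theorem theorem4p2:
  fixes V :: "'a set" and E :: "'a \<Rightarrow> 'a \<Rightarrow> bool" and k :: nat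
  assumes "simple_graph V E" and "connected_graph V E" and "k \<ge> 1"
  defines "m \<equiv> card (edges V E)"
      and "SV \<equiv> subdiv_V V E k" and "SE \<equiv> subdiv_E V E k" and "N \<equiv> subdiv_new V E k"
  shows
   "(\<forall>i\<in>V. \<forall>j\<in>V. i \<noteq> j \<longrightarrow>
       hitting_time SV SE (Inl i) (Inl j) = 4 * hitting_time V E i j)
  \<and> (\<forall>i\<in>N. \<forall>j\<in>V. \<forall>s t. {x. SE i x} = {Inl s, Inl t} \<longrightarrow>
       hitting_time SV SE i (Inl j) = 1 + 2 * hitting_time V E s j + 2 * hitting_time V E t j
     \<and> hitting_time SV SE (Inl j) i =
         2 * real k * real m - 1 + 2 * (hitting_time V E j s + hitting_time V E j t)
         - (hitting_time V E t s + hitting_time V E s t))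
  \<and> (\<forall>i\<in>N. \<forall>j\<in>N. \<forall>s t p q. i \<noteq> j \<longrightarrow>
       {x. SE i x} = {Inl s, Inl t} \<longrightarrow> {x. SE j x} = {Inl p, Inl q} \<longrightarrow>
       hitting_time SV SE i j =
         2 * real k * real m + hitting_time V E s p + hitting_time V E s q
         + hitting_time V E t p + hitting_time V E t q
         - hitting_time V E q p - hitting_time V E p q
     \<and> hitting_time SV SE j i =
         2 * real k * real m + hitting_time V E p s + hitting_time V E q s
         + hitting_time V E p t + hitting_time V E q t
         - hitting_time V E t s - hitting_time V E s t)"
proof -
  interpret S: sub V E k using assms(1-3) by unfold_locales
  have A: "\<forall>i\<in>V. \<forall>j\<in>V. i \<noteq> j \<longrightarrow>
       hitting_time SV SE (Inl i) (Inl j) = 4 * hitting_time V E i j"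
    unfolding SV_def SE_def using S.part1 by blast
  have B: "\<forall>i\<in>N. \<forall>j\<in>V. \<forall>s t. {x. SE i x} = {Inl s, Inl t} \<longrightarrow>
       hitting_time SV SE i (Inl j) = 1 + 2 * hitting_time V E s j + 2 * hitting_time V E t j
     \<and> hitting_time SV SE (Inl j) i =
         2 * real k * real m - 1 + 2 * (hitting_time V E j s + hitting_time V E j t)
         - (hitting_time V E t s + hitting_time V E s t)"
    unfolding SV_def SE_def N_def m_def using S.part2a S.part2b by blast
  have C: "\<forall>i\<in>N. \<forall>j\<in>N. \<forall>s t p q. i \<noteq> j \<longrightarrow>
       {x. SE i x} = {Inl s, Inl t} \<longrightarrow> {x. SE j x} = {Inl p, Inl q} \<longrightarrow>
       hitting_time SV SE i j =
         2 * real k * real m + hitting_time V E s p + hitting_time V E s q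
         + hitting_time V E t p + hitting_time V E t q
         - hitting_time V E q p - hitting_time V E p q
     \<and> hitting_time SV SE j i =
         2 * real k * real m + hitting_time V E p s + hitting_time V E q s
         + hitting_time V E p t + hitting_time V E q t
         - hitting_time V E t s - hitting_time V E s t"
  proof (intro ballI allI impI conjI)
    fix i j s t p q
    assume h: "i \<in> N" "j \<in> N" "i \<noteq> j" "{x. SE i x} = {Inl s, Inl t}" "{x. SE j x} = {Inl p, Inl q}"
    show "hitting_time SV SE i j =
         2 * real k * real m + hitting_time V E s p + hitting_time V E s q
         + hitting_time V E t p + hitting_time V E t q
         - hitting_time V E q p - hitting_time V E p q"
      using S.part3[of i j s t p q] h unfolding SV_def SE_def N_def m_def by blast
    show "hitting_time SV SE j i =
         2 * real k * real m + hitting_time V E p s + hitting_time V E q s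
         + hitting_time V E p t + hitting_time V E q t
         - hitting_time V E t s - hitting_time V E s t"
      using S.part3[of j i p q s t] h unfolding SV_def SE_def N_def m_def by auto
  qed
  show ?thesis using A B C by blast
qed

end
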